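(* Let $D$ be a friendship digraph of order $n$. Then for each vertex $v\in V(D)$: (a) $d^+(v)=d^-(v)$; and (b) $\sum_{u\in N^+(v)}\bigl(d^-(u)-1\bigr)=n-1$.
   Context: All digraphs are finite and have neither loops nor parallel arcs (a pair of opposite arcs $(u,v)$ and $(v,u)$ is allowed). $N^+(v)$, $N^-(v)$ are the out- and in-neighborhoods of $v$, and $d^+(v)=|N^+(v)|$, $d^-(v)=|N^-(v)|$. A friendship digraph is a nontrivial digraph (at least two vertices) in which any two distinct vertices have exactly one common out-neighbor. *)

theory Defs
  imports Main
begin

text \<open>A digraph is given by a vertex set V and an arc relation A (A u v means arc (u,v)).
  Loops are excluded; parallel arcs are impossible by representation; opposite arcs allowed.\<close>

definition digraph :: "'a set \<Rightarrow> ('a \<Rightarrow> 'a \<Rightarrow> bool) \<Rightarrow> bool" where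
  "digraph V A \<longleftrightarrow> finite V \<and> (\<forall>u v. A u v \<longrightarrow> u \<in> V \<and> v \<in> V \<and> u \<noteq> v)"

definition out_nbrs :: "'a set \<Rightarrow> ('a \<Rightarrow> 'a \<Rightarrow> bool) \<Rightarrow> 'a \<Rightarrow> 'a set" where
  "out_nbrs V A v = {u \<in> V. A v u}"

definition in_nbrs :: "'a set \<Rightarrow> ('a \<Rightarrow> 'a \<Rightarrow> bool) \<Rightarrow> 'a \<Rightarrow> 'a set" where
  "in_nbrs V A v = {u \<in> V. A u v}"

definition outdeg :: "'a set \<Rightarrow> ('a \<Rightarrow> 'a \<Rightarrow> bool) \<Rightarrow> 'a \<Rightarrow> nat" where
  "outdeg V A v = card (out_nbrs V A v)"

definition indeg :: "'a set \<Rightarrow> ('a \<Rightarrow> 'a \<Rightarrow> bool) \<Rightarrow> 'a \<Rightarrow> nat" where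
  "indeg V A v = card (in_nbrs V A v)"

definition friendship_digraph :: "'a set \<Rightarrow> ('a \<Rightarrow> 'a \<Rightarrow> bool) \<Rightarrow> bool" where
  "friendship_digraph V A \<longleftrightarrow> digraph V A \<and> card V \<ge> 2 \<and>
     (\<forall>u\<in>V. \<forall>v\<in>V. u \<noteq> v \<longrightarrow> (\<exists>!w. w \<in> out_nbrs V A u \<inter> out_nbrs V A v))"

end

theory Submission
  imports Defs
begin

lemma uniq_common:
  assumes F: "friendship_digraph V A" and "u \<in> V" "v \<in> V" "u \<noteq> v"
    and "A u w" "A v w" "A u w'" "A v w'"
  shows "w = w'"
proof -
  have D: "digraph V A" using F by (simp add: friendship_digraph_def)
  have "\<exists>!w. w \<in> out_nbrs V A u \<inter> out_nbrs V A v"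
    using F assms(2-4) by (simp add: friendship_digraph_def)
  moreover have "w \<in> out_nbrs V A u \<inter> out_nbrs V A v" "w' \<in> out_nbrs V A u \<inter> out_nbrs V A v"
    using D assms(5-8) by (auto simp: out_nbrs_def digraph_def)
  ultimately show ?thesis by blast
qed

lemma exists_common:
  assumes F: "friendship_digraph V A" and "u \<in> V" "v \<in> V" "u \<noteq> v"
  shows "\<exists>w\<in>V. A u w \<and> A v w"
proof -
  have "\<exists>!w. w \<in> out_nbrs V A u \<inter> out_nbrs V A v"
    using F assms(2-4) by (simp add: friendship_digraph_def)
  then show ?thesis by (auto simp: out_nbrs_def)
qed

lemma in_le_out:
  assumes F: "friendship_digraph V A" and v: "v \<in> V"
  shows "indeg V A v \<le> outdeg V A v"
proof -
  have D: "digraph V A" using F by (simp add: friendship_digraph_def)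
  have fin: "finite V" using D by (simp add: digraph_def)
  define c where "c x = (SOME w. w \<in> V \<and> A x w \<and> A v w)" for x
  have c: "c x \<in> V \<and> A x (c x) \<and> A v (c x)" if "x \<in> in_nbrs V A v" for x
  proof -
    have "x \<in> V" "x \<noteq> v" using that D by (auto simp: in_nbrs_def digraph_def)
    then have "\<exists>w. w \<in> V \<and> A x w \<and> A v w" using exists_common[OF F _ v] by blast
    then show ?thesis unfolding c_def by (rule someI_ex)
  qed
  have "inj_on c (in_nbrs V A v)"
  proof (rule inj_onI)
    fix x y assume x: "x \<in> in_nbrs V A v" and y: "y \<in> in_nbrs V A v" and e: "c x = c y"
    show "x = y"
    proof (rule ccontr)
      assume ne: "x \<noteq> y"
      have "x \<in> V" "y \<in> V" "A x v" "A y v" using x y by (auto simp: in_nbrs_def)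
      moreover have "A x (c x)" "A y (c x)" "A v (c x)" using c[OF x] c[OF y] e by auto
      ultimately have "v = c x" using uniq_common[OF F, of x y v "c x"] ne by blast
      with \<open>A v (c x)\<close> D show False by (auto simp: digraph_def)
    qed
  qed
  moreover have "c ` in_nbrs V A v \<subseteq> out_nbrs V A v" using c by (auto simp: out_nbrs_def)
  moreover have "finite (out_nbrs V A v)" using fin by (simp add: out_nbrs_def)
  ultimately show ?thesis unfolding indeg_def outdeg_def using card_inj_on_le by blast
qed

lemma sum_eq:
  assumes fin: "finite V"
  shows "(\<Sum>v\<in>V. outdeg V A v) = (\<Sum>v\<in>V. indeg V A v)"
proof -
  have "(\<Sum>v\<in>V. outdeg V A v) = (\<Sum>v\<in>V. \<Sum>u\<in>V. if A v u then 1 else 0)"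
    using fin by (simp add: outdeg_def out_nbrs_def sum.inter_filter[symmetric])
  also have "\<dots> = (\<Sum>u\<in>V. \<Sum>v\<in>V. if A v u then 1 else 0)" by (rule sum.swap)
  also have "\<dots> = (\<Sum>v\<in>V. indeg V A v)"
    using fin by (simp add: indeg_def in_nbrs_def sum.inter_filter[symmetric])
  finally show ?thesis .
qed

theorem proposition2p2:
  fixes V :: "'a set" and A :: "'a \<Rightarrow> 'a \<Rightarrow> bool" and n :: nat
  assumes "friendship_digraph V A"
    and "card V = n"
  shows "\<forall>v\<in>V. outdeg V A v = indeg V A v \<and>
           (\<Sum>u\<in>out_nbrs V A v. int (indeg V A u) - 1) = int n - 1"
proof
  fix v assume v: "v \<in> V"
  note F = assms(1)
  have D: "digraph V A" using F by (simp add: friendship_digraph_def)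
  have fin: "finite V" using D by (simp add: digraph_def)
  have le: "\<forall>x\<in>V. indeg V A x \<le> outdeg V A x" using in_le_out[OF F] by blast
  have "(\<Sum>x\<in>V. outdeg V A x - indeg V A x) = (\<Sum>x\<in>V. outdeg V A x) - (\<Sum>x\<in>V. indeg V A x)"
    using le by (simp add: sum_subtractf_nat)
  also have "\<dots> = 0" using sum_eq[OF fin] by simp
  finally have "\<forall>x\<in>V. outdeg V A x - indeg V A x = 0" using fin by simp
  then have a: "outdeg V A v = indeg V A v" using le v by force
  define fib where "fib w = {u \<in> V - {v}. A u w}" for w
  have cover: "V - {v} = (\<Union>w\<in>out_nbrs V A v. fib w)"
  proof
    show "V - {v} \<subseteq> (\<Union>w\<in>out_nbrs V A v. fib w)"
    proof
      fix u assume u: "u \<in> V - {v}"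
      then obtain w where "w \<in> V" "A u w" "A v w" using exists_common[OF F _ v] by blast
      then show "u \<in> (\<Union>w\<in>out_nbrs V A v. fib w)" using u by (auto simp: fib_def out_nbrs_def)
    qed
  qed (auto simp: fib_def)
  have disj: "\<forall>w\<in>out_nbrs V A v. \<forall>w'\<in>out_nbrs V A v. w \<noteq> w' \<longrightarrow> fib w \<inter> fib w' = {}"
  proof (intro ballI impI)
    fix w w' assume w: "w \<in> out_nbrs V A v" and w': "w' \<in> out_nbrs V A v" and ne: "w \<noteq> w'"
    show "fib w \<inter> fib w' = {}"
    proof (rule ccontr)
      assume "fib w \<inter> fib w' \<noteq> {}"
      then obtain u where "u \<in> V" "u \<noteq> v" "A u w" "A u w'" by (auto simp: fib_def)
      moreover have "A v w" "A v w'" using w w' by (auto simp: out_nbrs_def)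
      ultimately have "w = w'" using uniq_common[OF F _ v] by blast
      with ne show False by simp
    qed
  qed
  have finN: "finite (out_nbrs V A v)" using fin by (simp add: out_nbrs_def)
  have "n - 1 = card (V - {v})" using assms(2) v fin by simp
  also have "\<dots> = (\<Sum>w\<in>out_nbrs V A v. card (fib w))"
  proof -
    have "\<forall>w\<in>out_nbrs V A v. finite (fib w)" using fin by (simp add: fib_def)
    then have "card (\<Union>w\<in>out_nbrs V A v. fib w) = (\<Sum>w\<in>out_nbrs V A v. card (fib w))"
      by (intro card_UN_disjoint[OF finN]) (simp_all add: disj)
    then show ?thesis using arg_cong[OF cover, of card] by (rule trans[rotated])
  qed
  finally have s: "n - 1 = (\<Sum>w\<in>out_nbrs V A v. card (fib w))" .
  have fw: "card (fib w) = indeg V A w - 1" and pos: "indeg V A w \<ge> 1"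
    if w: "w \<in> out_nbrs V A v" for w
  proof -
    have "fib w = in_nbrs V A w - {v}" by (auto simp: fib_def in_nbrs_def)
    moreover have "v \<in> in_nbrs V A w" using w v by (auto simp: in_nbrs_def out_nbrs_def)
    moreover have "finite (in_nbrs V A w)" using fin by (simp add: in_nbrs_def)
    ultimately show "card (fib w) = indeg V A w - 1" "indeg V A w \<ge> 1"
      by (auto simp: indeg_def card_gt_0_iff Suc_le_eq)
  qed
  have n1: "n \<ge> 1" using F assms(2) by (simp add: friendship_digraph_def)
  have "int n - 1 = int (n - 1)" using n1 by simp
  also have "\<dots> = (\<Sum>w\<in>out_nbrs V A v. int (indeg V A w - 1))" using s fw by simp
  also have "\<dots> = (\<Sum>w\<in>out_nbrs V A v. int (indeg V A w) - 1)"
    by (rule sum.cong) (use pos in auto)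
  finally show "outdeg V A v = indeg V A v \<and>
           (\<Sum>u\<in>out_nbrs V A v. int (indeg V A u) - 1) = int n - 1" using a by simp
qed

end
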